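(* Let $\mathcal{P}$ be a partition of $\mathbb{R}$. Suppose there exists $D\in(0,\infty)$ that is a strict pairwise bound for every $X\in\mathcal{P}$, and let $\epsilon\in(0,\infty)$ be such that $|\mathcal{N}_{\epsilon}(p)|\leq 2$ for all $p\in\mathbb{R}$. Then $\epsilon\leq\frac{D}{2}$.
   Context: $D$ is a strict pairwise bound for $X\subseteq\mathbb{R}$ if $|x-y|<D$ for all $x,y\in X$. $\mathcal{N}_{\epsilon}(p)=\{X\in\mathcal{P}: X\cap[p-\epsilon,p+\epsilon]\neq\emptyset\}$. *)

theory Defs
  imports Complex_Main "HOL-Library.Disjoint_Sets"
begin

definition strict_pairwise_bound :: "real \<Rightarrow> real set \<Rightarrow> bool" where
  "strict_pairwise_bound D X \<longleftrightarrow> (\<forall>x\<in>X. \<forall>y\<in>X. \<bar>x - y\<bar> < D)"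

definition nbhd :: "real set set \<Rightarrow> real \<Rightarrow> real \<Rightarrow> real set set" where
  "nbhd P eps p = {X \<in> P. X \<inter> {p - eps .. p + eps} \<noteq> {}}"

end

theory Submission
  imports Defs
begin

theorem mainTheorem19:
  fixes P :: "real set set" and D eps :: real
  assumes "partition_on (UNIV :: real set) P"
    and "D > 0"
    and "\<forall>X\<in>P. strict_pairwise_bound D X"
    and "eps > 0"
    and "\<forall>p. finite (nbhd P eps p) \<and> card (nbhd P eps p) \<le> 2"
  shows "eps \<le> D / 2"
proof (rule ccontr)
  assume neg: "\<not> eps \<le> D / 2"
  have cov: "\<And>x. \<exists>X\<in>P. x \<in> X" using assms(1) unfolding partition_on_def by blast
  obtain X where X: "X \<in> P" "0 \<in> X" using cov by blast
  have bX: "\<And>x y. x \<in> X \<Longrightarrow> y \<in> X \<Longrightarrow> \<bar>x - y\<bar> < D"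
    using assms(3) X(1) unfolding strict_pairwise_bound_def by blast
  define m where "m = Inf X"
  have bdd: "bdd_below X"
    proof (rule bdd_belowI[of _ "-D"])
    fix x assume "x \<in> X" then show "-D \<le> x" using bX[of x 0] X(2) by auto
  qed
  have mle: "\<And>x. x \<in> X \<Longrightarrow> m \<le> x" unfolding m_def using bdd by (simp add: cInf_lower)
  have xle: "\<And>x. x \<in> X \<Longrightarrow> x \<le> m + D"
  proof -
    fix x assume x: "x \<in> X"
    have "x - D \<le> m" unfolding m_def
      by (rule cInf_greatest) (use X(2) bX[OF x] in \<open>force simp: abs_less_iff\<close>)+
    then show "x \<le> m + D" by simp
  qed
  define a where "a = m - (2*eps - D)/2"
  define b where "b = a + 2*eps"
  define p where "p = a + eps"
  obtain Y where Y: "Y \<in> P" "a \<in> Y" using cov by blast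
  obtain Z where Z: "Z \<in> P" "b \<in> Z" using cov by blast
  have aX: "a \<notin> X" using mle[of a] neg unfolding a_def by auto
  have "b > m + D" using neg unfolding b_def a_def by (simp add: field_simps)
  then have bX': "b \<notin> X" using xle[of b] by force
  have XY: "X \<noteq> Y" using aX Y by auto
  have XZ: "X \<noteq> Z" using bX' Z by auto
  have YZ: "Y \<noteq> Z"
  proof
    assume "Y = Z"
    then have "\<bar>b - a\<bar> < D" using assms(3) Y Z unfolding strict_pairwise_bound_def by blast
    then show False using neg unfolding b_def by auto
  qed
  have m0: "m \<le> 0" using mle X(2) by auto
  have "{X, Y, Z} \<subseteq> nbhd P eps p"
    unfolding nbhd_def
  proof (intro subsetI CollectI, elim insertE)
    fix W assume "W = X"
    moreover have "0 \<in> {p - eps..p + eps}"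
      using m0 xle[OF X(2)] neg unfolding p_def a_def by (auto simp: field_simps)
    ultimately show "W \<in> P \<and> W \<inter> {p - eps..p + eps} \<noteq> {}" using X by blast
  next
    fix W assume "W = Y"
    moreover have "a \<in> {p - eps..p + eps}" using assms(4) unfolding p_def by auto
    ultimately show "W \<in> P \<and> W \<inter> {p - eps..p + eps} \<noteq> {}" using Y by blast
  next
    fix W assume "W = Z"
    moreover have "b \<in> {p - eps..p + eps}" using assms(4) unfolding p_def b_def by auto
    ultimately show "W \<in> P \<and> W \<inter> {p - eps..p + eps} \<noteq> {}" using Z by blast
  qed simp
  then have "card {X, Y, Z} \<le> card (nbhd P eps p)" using assms(5) by (simp add: card_mono)
  moreover have "card {X, Y, Z} = 3" using XY XZ YZ by simp
  moreover have "card (nbhd P eps p) \<le> 2" using assms(5) by blast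
  ultimately show False by linarith
qed

end
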